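(* Let $X$ be a set with at least two elements and let $A_1,\dots,A_m$ be finite subsets of the free monoid $\langle X\rangle$ such that all elements of $A_i$ have the same degree $n_i$ ($i=1,\dots,m$). Then there exist an integer $t\geq\max\{n_i\mid 1\le i\le m\}$ and elements $\nu_1,\dots,\nu_m\in\langle X\rangle$ with $\deg\nu_i=t-n_i$ such that the sets $A_1\nu_1,\dots,A_m\nu_m$ are pairwise disjoint.
   Context: The degree of a monomial $x_1x_2\cdots x_n\in\langle X\rangle$ ($x_i\in X$) is $n$. $A_i\nu_i=\{a\nu_i\mid a\in A_i\}$. *)

theory Defs
  imports Main
begin

text \<open>The free monoid over X is modelled as the set of lists over X
(concatenation, empty word as unit); the degree of a monomial is its length.\<close>

abbreviation free_monoid :: "'a set \<Rightarrow> 'a list set" where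
  "free_monoid X \<equiv> lists X"

abbreviation deg :: "'a list \<Rightarrow> nat" where
  "deg w \<equiv> length w"

definition right_mult :: "'a list set \<Rightarrow> 'a list \<Rightarrow> 'a list set" where
  "right_mult A \<nu> = (\<lambda>a. a @ \<nu>) ` A"

end

theory Submission
  imports Defs
begin

lemma sdist:
  assumes "x \<noteq> y" "i < m" "j < m" "i \<noteq> j"
  shows "replicate i y @ replicate (m - i) x \<noteq> replicate j y @ replicate (m - j) (x::'a)"
proof
  assume e: "replicate i y @ replicate (m - i) x = replicate j y @ replicate (m - j) x"
  have nth: "\<And>k l. k < m \<Longrightarrow> l \<le> m \<Longrightarrow> (replicate l y @ replicate (m - l) x) ! k = (if k < l then y else x)"
    by (simp add: nth_append)
  show False
  proof (cases "i < j")
    case True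
    have "(replicate i y @ replicate (m - i) x) ! i = x" using nth[of i i] assms by simp
    moreover have "(replicate j y @ replicate (m - j) x) ! i = y" using nth[of i j] assms True by simp
    ultimately show False using e assms by simp
  next
    case False
    then have "j < i" using assms by simp
    have "(replicate j y @ replicate (m - j) x) ! j = x" using nth[of j j] assms by simp
    moreover have "(replicate i y @ replicate (m - i) x) ! j = y" using nth[of j i] assms \<open>j < i\<close> by simp
    ultimately show False using e assms by simp
  qed
qed

theorem mainTheorem6:
  fixes X :: "'a set" and A :: "nat \<Rightarrow> 'a list set" and n :: "nat \<Rightarrow> nat" and m :: nat
  assumes X2: "\<exists>x\<in>X. \<exists>y\<in>X. x \<noteq> y"
    and Asub: "\<And>i. i < m \<Longrightarrow> A i \<subseteq> free_monoid X"
    and Afin: "\<And>i. i < m \<Longrightarrow> finite (A i)"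
    and Adeg: "\<And>i a. i < m \<Longrightarrow> a \<in> A i \<Longrightarrow> deg a = n i"
  shows "\<exists>t::nat. (\<forall>i<m. n i \<le> t) \<and>
           (\<exists>\<nu> :: nat \<Rightarrow> 'a list.
              (\<forall>i<m. \<nu> i \<in> free_monoid X \<and> deg (\<nu> i) = t - n i) \<and>
              (\<forall>i<m. \<forall>j<m. i \<noteq> j \<longrightarrow> right_mult (A i) (\<nu> i) \<inter> right_mult (A j) (\<nu> j) = {}))"
proof -
  obtain x y where xy: "x \<in> X" "y \<in> X" "x \<noteq> y" using X2 by blast
  define N where "N = (\<Sum>i<m. n i)"
  define t where "t = N + m"
  define s where "s = (\<lambda>i. replicate i y @ replicate (m - i) x)"
  define \<nu> where "\<nu> = (\<lambda>i. replicate (t - n i - m) x @ s i)"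
  have nN: "\<And>i. i < m \<Longrightarrow> n i \<le> N" unfolding N_def
    by (rule member_le_sum) auto
  have ls: "\<And>i. i < m \<Longrightarrow> length (s i) = m" unfolding s_def by simp
  have lnu: "\<And>i. i < m \<Longrightarrow> length (\<nu> i) = t - n i"
    using nN ls unfolding \<nu>_def t_def by fastforce
  have nuX: "\<And>i. i < m \<Longrightarrow> \<nu> i \<in> lists X"
    unfolding \<nu>_def s_def using xy by auto
  have disj: "right_mult (A i) (\<nu> i) \<inter> right_mult (A j) (\<nu> j) = {}"
    if ij: "i < m" "j < m" "i \<noteq> j" for i j
  proof (rule ccontr)
    assume "right_mult (A i) (\<nu> i) \<inter> right_mult (A j) (\<nu> j) \<noteq> {}"
    then obtain a b where ab: "a \<in> A i" "b \<in> A j" "a @ \<nu> i = b @ \<nu> j"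
      unfolding right_mult_def by auto
    have "(a @ replicate (t - n i - m) x) @ s i = (b @ replicate (t - n j - m) x) @ s j"
      using ab(3) unfolding \<nu>_def by simp
    moreover have "length (s i) = length (s j)" using ls ij by simp
    ultimately have "s i = s j" by (metis append_eq_append_conv)
    then show False using sdist[OF xy(3) ij] unfolding s_def by simp
  qed
  show ?thesis
    apply (rule exI[of _ t], intro conjI)
    using nN t_def apply fastforce
    apply (rule exI[of _ \<nu>])
    using lnu nuX disj by blast
qed

end
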